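(* Let $\mathcal G=(G,\pi_G,c_G)\in\mathrm{LiftPMod}(\mathbb B,\mathcal C)$ with $G=(V_G,E_G)$ and $w_G\in\mathrm{Param}(\mathcal G)$; let $\mathcal H=(H,\pi_H,c_H)\in\mathrm{LiftPMod}(\mathbb B,\mathcal C)$ and $w_H\in\mathrm{Param}(\mathcal H)$; let $\mathcal X\subseteq\prod_{u\in\mathcal C}\mathcal Y_{p_{\mathcal C}(u)}$. Let $\eta\in\mathbb R_+$ and suppose $\varphi:\mathcal G\to\mathcal H$ is a morphism of lifted perceptrons such that $\|(w_G)_e-(w_H)_{\varphi(e)}\|\le\eta$ for all $e\in E_G$. Then for every $v\in V_G$, $\sup_{x\in\mathcal X}\|[\mathcal F_{\mathcal G}(w_G,x)]_v-[\mathcal F_{\mathcal H}(w_H,x)]_{\varphi(v)}\|\le L[\mathcal H,w_H](\eta,\mathcal X)$.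
   Context: Graphs: $G=(V,E)$, $V$ finite, $E\subseteq V\times V$; $G(-,v)=\{u:(u,v)\in E\}$. A homomorphism maps vertices preserving edges, acting on edges by $\varphi(u,v)=(\varphi(u),\varphi(v))$. A fibration is a homomorphism restricting to bijections $G(-,v)\to H(-,\varphi(v))$ for all $v$. A perceptron module over a finite DAG $B=(V_B,E_B)$ is $\mathbb B=((I_B,T_B),(\mathcal Y,\mathcal Z,\mathcal W),(M,\sigma))$: $I_B\subseteq V_B$ (vertices without parents), $T_B\subseteq V_B$, families of finite-dimensional real inner product spaces $\mathcal Y_v$ ($v\in V_B$), $\mathcal Z_e,\mathcal W_e$ ($e\in E_B$), maps $M_{(u,v)}:\mathcal W_{(u,v)}\times\mathcal Y_u\to\mathcal Z_{(u,v)}$ and $\sigma_v:\prod_{u\in B(-,v)}\mathcal Z_{(u,v)}\to\mathcal Y_v$ ($v\notin I_B$). Fix such $\mathbb B$, a finite set $\mathcal C$, $p_{\mathcal C}:\mathcal C\to I_B$. $\mathrm{LiftPMod}(\mathbb B,\mathcal C)$: triples $(G,\pi,c)$, $\pi:G\to B$ homomorphism, $c:\pi^{-1}(I_B)\to\mathcal C$ injective with $p_{\mathcal C}\circ c=\pi$ there. $\mathrm{Param}(\mathcal G)=\prod_{e\in E_G}\mathcal W_{\pi(e)}$. Forward function $\mathcal F_{\mathcal G}(w,x)=f$: $f_v=x_{c(v)}$ if $\pi(v)\in I_B$, else $f_v=F_v(w,f)$ where $F_v(w,g)=\sigma_{\pi(v)}((\sum_{u\in G(-,v)\cap\pi^{-1}(a)}M_{\pi(u,v)}(w_{(u,v)},g_u))_{a\in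 B(-,\pi(v))})$ (depends only on $w_{(u,v)},g_u$ for $u\in G(-,v)$). A morphism of lifted perceptrons $\varphi:(G,\pi_G,c_G)\to(H,\pi_H,c_H)$ is a fibration with $\pi_G=\pi_H\circ\varphi$ and $c_G=c_H\circ\varphi$. Quantitative continuity constant: for $\mathcal H=(H,\pi_H,c_H)$, $w^0\in\mathrm{Param}(\mathcal H)$, $\eta\ge0$, $x\in\mathcal X$, let $g^0=\mathcal F_{\mathcal H}(w^0,x)$; set $[L(\eta,x)]_v=0$ if $\pi_H(v)\in I_B$, and inductively otherwise $[L(\eta,x)]_v=\sup\|F_v(w,g)-F_v(w^0,g^0)\|$ over all $(w_{(u,v)},g_u)_{u\in H(-,v)}$ with $\|w_{(u,v)}-w^0_{(u,v)}\|\le\eta$ and $\|g_u-g^0_u\|\le[L(\eta,x)]_u$ ($F_v$ computed in $\mathcal H$). Then $L[\mathcal H,w^0](\eta,\mathcal X)=\sup_{x\in\mathcal X}\max_{v\in V_H}[L(\eta,x)]_v\in[0,+\infty]$. *)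

theory Defs
  imports "HOL-Analysis.Analysis"
begin

definition is_graph :: "'a set \<Rightarrow> ('a \<times> 'a) set \<Rightarrow> bool" where
  "is_graph V E \<longleftrightarrow> finite V \<and> E \<subseteq> V \<times> V"

definition in_nbrs :: "('a \<times> 'a) set \<Rightarrow> 'a \<Rightarrow> 'a set" where
  "in_nbrs E v = {u. (u, v) \<in> E}"

definition graph_hom :: "'a set \<Rightarrow> ('a \<times> 'a) set \<Rightarrow> 'b set \<Rightarrow> ('b \<times> 'b) set \<Rightarrow> ('a \<Rightarrow> 'b) \<Rightarrow> bool" where
  "graph_hom VG EG VH EH \<phi> \<longleftrightarrow> \<phi> ` VG \<subseteq> VH \<and> (\<forall>(u, v) \<in> EG. (\<phi> u, \<phi> v) \<in> EH)"

definition fibration :: "'a set \<Rightarrow> ('a \<times> 'a) set \<Rightarrow> 'b set \<Rightarrow> ('b \<times> 'b) set \<Rightarrow> ('a \<Rightarrow> 'b) \<Rightarrow> bool" where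
  "fibration VG EG VH EH \<phi> \<longleftrightarrow> graph_hom VG EG VH EH \<phi> \<and>
     (\<forall>v \<in> VG. bij_betw \<phi> (in_nbrs EG v) (in_nbrs EH (\<phi> v)))"

text \<open>The inner product spaces
  Y_v, Z_e, W_e are modelled as linear subspaces of ambient Euclidean spaces
  (every finite-dimensional real inner product space is isometric to such a subspace).
  The argument of sigma_v is a family indexed by the parents of v; entries outside
  the parents are ignored (we always pass 0 there).\<close>

definition perceptron_module ::
  "'b set \<Rightarrow> ('b \<times> 'b) set \<Rightarrow> 'b set \<Rightarrow> 'b set \<Rightarrow>
   ('b \<Rightarrow> 'y::euclidean_space set) \<Rightarrow> ('b \<times> 'b \<Rightarrow> 'z::euclidean_space set) \<Rightarrow>
   ('b \<times> 'b \<Rightarrow> 'w::euclidean_space set) \<Rightarrow>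
   ('b \<times> 'b \<Rightarrow> 'w \<Rightarrow> 'y \<Rightarrow> 'z) \<Rightarrow> ('b \<Rightarrow> ('b \<Rightarrow> 'z) \<Rightarrow> 'y) \<Rightarrow> bool" where
  "perceptron_module VB EB IB TB Y Z W M \<sigma> \<longleftrightarrow>
     is_graph VB EB \<and> acyclic EB \<and>
     IB \<subseteq> VB \<and> (\<forall>v \<in> IB. in_nbrs EB v = {}) \<and> TB \<subseteq> VB \<and>
     (\<forall>v \<in> VB. subspace (Y v)) \<and> (\<forall>e \<in> EB. subspace (Z e) \<and> subspace (W e)) \<and>
     (\<forall>(u, v) \<in> EB. \<forall>w \<in> W (u, v). \<forall>y \<in> Y u. M (u, v) w y \<in> Z (u, v)) \<and>
     (\<forall>v \<in> VB - IB. \<forall>z. (\<forall>a \<in> in_nbrs EB v. z a \<in> Z (a, v)) \<longrightarrow> \<sigma> v z \<in> Y v)"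

definition lifted_perceptron ::
  "'b set \<Rightarrow> ('b \<times> 'b) set \<Rightarrow> 'b set \<Rightarrow> 'c set \<Rightarrow> ('c \<Rightarrow> 'b) \<Rightarrow>
   'g set \<Rightarrow> ('g \<times> 'g) set \<Rightarrow> ('g \<Rightarrow> 'b) \<Rightarrow> ('g \<Rightarrow> 'c) \<Rightarrow> bool" where
  "lifted_perceptron VB EB IB C pC VG EG \<pi> c \<longleftrightarrow>
     is_graph VG EG \<and> graph_hom VG EG VB EB \<pi> \<and>
     inj_on c {v \<in> VG. \<pi> v \<in> IB} \<and>
     (\<forall>v \<in> VG. \<pi> v \<in> IB \<longrightarrow> c v \<in> C \<and> pC (c v) = \<pi> v)"

definition is_param ::
  "('b \<times> 'b \<Rightarrow> 'w set) \<Rightarrow> ('g \<times> 'g) set \<Rightarrow> ('g \<Rightarrow> 'b) \<Rightarrow> ('g \<times> 'g \<Rightarrow> 'w) \<Rightarrow> bool" where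
  "is_param W EG \<pi> w \<longleftrightarrow> (\<forall>(u, v) \<in> EG. w (u, v) \<in> W (\<pi> u, \<pi> v))"

definition Floc ::
  "('b \<times> 'b) set \<Rightarrow> ('g \<times> 'g) set \<Rightarrow> ('g \<Rightarrow> 'b) \<Rightarrow>
   ('b \<times> 'b \<Rightarrow> 'w \<Rightarrow> 'y \<Rightarrow> 'z::real_vector) \<Rightarrow> ('b \<Rightarrow> ('b \<Rightarrow> 'z) \<Rightarrow> 'y) \<Rightarrow>
   ('g \<times> 'g \<Rightarrow> 'w) \<Rightarrow> ('g \<Rightarrow> 'y) \<Rightarrow> 'g \<Rightarrow> 'y" where
  "Floc EB EG \<pi> M \<sigma> w g v =
     \<sigma> (\<pi> v) (\<lambda>a. if a \<in> in_nbrs EB (\<pi> v)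
                   then (\<Sum>u \<in> {u \<in> in_nbrs EG v. \<pi> u = a}. M (\<pi> u, \<pi> v) (w (u, v)) (g u))
                   else 0)"

text \<open>Forward function: the (unique, since G maps to a DAG) family f indexed by V_G
  satisfying the defining inductive equations.\<close>

definition forward ::
  "'b set \<Rightarrow> ('b \<times> 'b) set \<Rightarrow> 'g set \<Rightarrow> ('g \<times> 'g) set \<Rightarrow> ('g \<Rightarrow> 'b) \<Rightarrow> ('g \<Rightarrow> 'c) \<Rightarrow>
   ('b \<times> 'b \<Rightarrow> 'w \<Rightarrow> 'y \<Rightarrow> 'z::real_vector) \<Rightarrow> ('b \<Rightarrow> ('b \<Rightarrow> 'z) \<Rightarrow> 'y) \<Rightarrow>
   ('g \<times> 'g \<Rightarrow> 'w) \<Rightarrow> ('c \<Rightarrow> 'y) \<Rightarrow> 'g \<Rightarrow> 'y" where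
  "forward IB EB VG EG \<pi> c M \<sigma> w x =
     (THE f. f \<in> extensional VG \<and>
        (\<forall>v \<in> VG. f v = (if \<pi> v \<in> IB then x (c v) else Floc EB EG \<pi> M \<sigma> w f v)))"

definition Lvals ::
  "'b set \<Rightarrow> ('b \<times> 'b) set \<Rightarrow> ('b \<Rightarrow> 'y::real_normed_vector set) \<Rightarrow> ('b \<times> 'b \<Rightarrow> 'w::real_normed_vector set) \<Rightarrow>
   'h set \<Rightarrow> ('h \<times> 'h) set \<Rightarrow> ('h \<Rightarrow> 'b) \<Rightarrow> ('h \<Rightarrow> 'c) \<Rightarrow>
   ('b \<times> 'b \<Rightarrow> 'w \<Rightarrow> 'y \<Rightarrow> 'z::real_vector) \<Rightarrow> ('b \<Rightarrow> ('b \<Rightarrow> 'z) \<Rightarrow> 'y) \<Rightarrow>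
   ('h \<times> 'h \<Rightarrow> 'w) \<Rightarrow> real \<Rightarrow> ('c \<Rightarrow> 'y) \<Rightarrow> 'h \<Rightarrow> ennreal" where
  "Lvals IB EB Y W VH EH \<pi> c M \<sigma> w0 \<eta> x =
     (let g0 = forward IB EB VH EH \<pi> c M \<sigma> w0 x in
      THE l. l \<in> extensional VH \<and>
        (\<forall>v \<in> VH. l v =
          (if \<pi> v \<in> IB then 0
           else Sup {ennreal (norm (Floc EB EH \<pi> M \<sigma> w g v - Floc EB EH \<pi> M \<sigma> w0 g0 v)) | w g.
                       \<forall>u \<in> in_nbrs EH v.
                          w (u, v) \<in> W (\<pi> u, \<pi> v) \<and> norm (w (u, v) - w0 (u, v)) \<le> \<eta> \<and>
                          g u \<in> Y (\<pi> u) \<and> ennreal (norm (g u - g0 u)) \<le> l u})))"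

definition Lconst ::
  "'b set \<Rightarrow> ('b \<times> 'b) set \<Rightarrow> ('b \<Rightarrow> 'y::real_normed_vector set) \<Rightarrow> ('b \<times> 'b \<Rightarrow> 'w::real_normed_vector set) \<Rightarrow>
   'h set \<Rightarrow> ('h \<times> 'h) set \<Rightarrow> ('h \<Rightarrow> 'b) \<Rightarrow> ('h \<Rightarrow> 'c) \<Rightarrow>
   ('b \<times> 'b \<Rightarrow> 'w \<Rightarrow> 'y \<Rightarrow> 'z::real_vector) \<Rightarrow> ('b \<Rightarrow> ('b \<Rightarrow> 'z) \<Rightarrow> 'y) \<Rightarrow>
   ('h \<times> 'h \<Rightarrow> 'w) \<Rightarrow> real \<Rightarrow> ('c \<Rightarrow> 'y) set \<Rightarrow> ennreal" where
  "Lconst IB EB Y W VH EH \<pi> c M \<sigma> w0 \<eta> X =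
     (SUP x \<in> X. SUP v \<in> VH. Lvals IB EB Y W VH EH \<pi> c M \<sigma> w0 \<eta> x v)"

end

theory Submission
  imports Defs
begin

lemma wf_fix_unique:
  assumes wf: "wf E"
    and cong: "\<And>f f' v. v \<in> V \<Longrightarrow> (\<forall>u. (u, v) \<in> E \<longrightarrow> f u = f' u) \<Longrightarrow> F f v = F f' v"
  shows "\<exists>!f. f \<in> extensional V \<and> (\<forall>v\<in>V. f v = F f v)"
proof (rule ex_ex1I)
  define r where "r = wfrec E (\<lambda>f v. if v \<in> V then F f v else undefined)"
  have r: "r v = (if v \<in> V then F (cut r E v) v else undefined)" for v
    unfolding r_def by (subst wfrec[OF wf]) simp
  have c: "F (cut r E v) v = F r v" if "v \<in> V" for v
    using cong[OF that] by (simp add: cut_apply)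
  have e: "r v = undefined" if "v \<notin> V" for v
    using r[of v] that by simp
  have "r v = F r v" if "v \<in> V" for v
    using r[of v] c[OF that] that by simp
  then have "r \<in> extensional V \<and> (\<forall>v\<in>V. r v = F r v)"
    using e unfolding extensional_def by blast
  then show "\<exists>r. r \<in> extensional V \<and> (\<forall>v\<in>V. r v = F r v)" by blast
next
  fix f g
  assume f: "f \<in> extensional V \<and> (\<forall>v\<in>V. f v = F f v)"
    and g: "g \<in> extensional V \<and> (\<forall>v\<in>V. g v = F g v)"
  have "f v = g v" for v
  proof (induction v rule: wf_induct[OF wf])
    case (1 v)
    show ?case
    proof (cases "v \<in> V")
      case True
      then have "F f v = F g v" using cong 1 by blast
      moreover have "f v = F f v" using f True by blast
      moreover have "g v = F g v" using g True by blast
      ultimately show ?thesis by (simp only:)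
    next
      case False
      then show ?thesis using f g extensional_arb by metis
    qed
  qed
  then show "f = g" by blast
qed

lemma hom_acyclic:
  assumes "graph_hom VG EG VB EB \<pi>" "acyclic EB"
  shows "acyclic EG"
proof -
  have "(\<pi> x, \<pi> y) \<in> EB\<^sup>+" if "(x, y) \<in> EG\<^sup>+" for x y
    using that
  proof (induction rule: trancl_induct)
    case (base y)
    then show ?case using assms(1) by (auto simp: graph_hom_def)
  next
    case (step y z)
    then have "(\<pi> y, \<pi> z) \<in> EB" using assms(1) by (auto simp: graph_hom_def)
    then show ?case using step by (meson trancl.trancl_into_trancl)
  qed
  then show ?thesis using assms(2) by (auto simp: acyclic_def)
qed

lemma lp_wf:
  assumes "perceptron_module VB EB IB TB Y Z W M \<sigma>"
    "lifted_perceptron VB EB IB C pC VG EG \<pi> c"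
  shows "wf EG"
proof -
  have fin: "finite EG" using assms(2) unfolding lifted_perceptron_def is_graph_def
    by (meson finite_SigmaI finite_subset)
  have "acyclic EG" using hom_acyclic assms unfolding lifted_perceptron_def perceptron_module_def
    by blast
  then show ?thesis using fin finite_acyclic_wf by blast
qed

lemma Floc_cong:
  assumes "\<forall>u\<in>in_nbrs EG v. w (u, v) = w' (u, v) \<and> g u = g' u"
  shows "Floc EB EG \<pi> M \<sigma> w g v = Floc EB EG \<pi> M \<sigma> w' g' v"
  unfolding Floc_def
  by (rule arg_cong[where f="\<sigma> (\<pi> v)"]) (auto intro!: sum.cong simp: assms)

lemma forward_eq:
  assumes "perceptron_module VB EB IB TB Y Z W M \<sigma>"
    "lifted_perceptron VB EB IB C pC VG EG \<pi> c"
  shows "forward IB EB VG EG \<pi> c M \<sigma> w x \<in> extensional VG \<and>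
     (\<forall>v \<in> VG. forward IB EB VG EG \<pi> c M \<sigma> w x v =
        (if \<pi> v \<in> IB then x (c v) else Floc EB EG \<pi> M \<sigma> w (forward IB EB VG EG \<pi> c M \<sigma> w x) v))"
proof -
  have wf: "wf EG" by (rule lp_wf[OF assms])
  have cong: "(\<lambda>f v. if \<pi> v \<in> IB then x (c v) else Floc EB EG \<pi> M \<sigma> w f v) f v =
     (\<lambda>f v. if \<pi> v \<in> IB then x (c v) else Floc EB EG \<pi> M \<sigma> w f v) f' v"
    if "v \<in> VG" "\<forall>u. (u, v) \<in> EG \<longrightarrow> f u = f' u" for f f' v
  proof -
    have "Floc EB EG \<pi> M \<sigma> w f v = Floc EB EG \<pi> M \<sigma> w f' v"
      using that(2) by (intro Floc_cong) (simp add: in_nbrs_def)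
    then show ?thesis by simp
  qed
  have "\<exists>!f. f \<in> extensional VG \<and>
        (\<forall>v \<in> VG. f v = (if \<pi> v \<in> IB then x (c v) else Floc EB EG \<pi> M \<sigma> w f v))"
    using wf_fix_unique[OF wf cong] by simp
  then show ?thesis unfolding forward_def by (rule theI')
qed

lemma Lvals_eq:
  fixes wz x and \<eta> :: real
  assumes "perceptron_module VB EB IB TB Y Z W M \<sigma>"
    "lifted_perceptron VB EB IB C pC VH EH \<pi> c"
  defines "g0 \<equiv> forward IB EB VH EH \<pi> c M \<sigma> wz x"
    and "L \<equiv> Lvals IB EB Y W VH EH \<pi> c M \<sigma> wz \<eta> x"
  shows "L \<in> extensional VH \<and>
        (\<forall>v \<in> VH. L v =
          (if \<pi> v \<in> IB then 0
           else Sup {ennreal (norm (Floc EB EH \<pi> M \<sigma> w g v - Floc EB EH \<pi> M \<sigma> wz g0 v)) | w g.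
                       \<forall>u \<in> in_nbrs EH v.
                          w (u, v) \<in> W (\<pi> u, \<pi> v) \<and> norm (w (u, v) - wz (u, v)) \<le> \<eta> \<and>
                          g u \<in> Y (\<pi> u) \<and> ennreal (norm (g u - g0 u)) \<le> L u}))"
proof -
  have wf: "wf EH" by (rule lp_wf[OF assms(1,2)])
  define F where "F = (\<lambda>l v. (if \<pi> v \<in> IB then 0
           else Sup {ennreal (norm (Floc EB EH \<pi> M \<sigma> w g v - Floc EB EH \<pi> M \<sigma> wz g0 v)) | w g.
                       \<forall>u \<in> in_nbrs EH v.
                          w (u, v) \<in> W (\<pi> u, \<pi> v) \<and> norm (w (u, v) - wz (u, v)) \<le> \<eta> \<and>
                          g u \<in> Y (\<pi> u) \<and> ennreal (norm (g u - g0 u)) \<le> l u}))"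
  have cong: "F f v = F f' v"
    if "v \<in> VH" "\<forall>u. (u, v) \<in> EH \<longrightarrow> f u = f' u" for f f' v
  proof -
    have h: "\<forall>u \<in> in_nbrs EH v. f u = f' u" using that(2) by (simp add: in_nbrs_def)
    have h2: "(\<forall>u \<in> in_nbrs EH v.
                          w (u, v) \<in> W (\<pi> u, \<pi> v) \<and> norm (w (u, v) - wz (u, v)) \<le> \<eta> \<and>
                          g u \<in> Y (\<pi> u) \<and> ennreal (norm (g u - g0 u)) \<le> f u) =
              (\<forall>u \<in> in_nbrs EH v.
                          w (u, v) \<in> W (\<pi> u, \<pi> v) \<and> norm (w (u, v) - wz (u, v)) \<le> \<eta> \<and>
                          g u \<in> Y (\<pi> u) \<and> ennreal (norm (g u - g0 u)) \<le> f' u)" for w g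
      using h by (metis (no_types, lifting))
    show ?thesis unfolding F_def by (simp only: h2)
  qed
  have ex1: "\<exists>!l. l \<in> extensional VH \<and> (\<forall>v \<in> VH. l v = F l v)"
    by (rule wf_fix_unique[OF wf cong])
  have Leq: "L = (THE l. l \<in> extensional VH \<and> (\<forall>v \<in> VH. l v = F l v))"
    unfolding L_def Lvals_def Let_def F_def g0_def by (rule refl)
  have "L \<in> extensional VH \<and> (\<forall>v \<in> VH. L v = F L v)"
    unfolding Leq by (rule theI'[OF ex1])
  then show ?thesis unfolding F_def .
qed

lemma forward_in_Y:
  assumes B: "perceptron_module VB EB IB TB Y Z W M \<sigma>"
    and G: "lifted_perceptron VB EB IB C pC VG EG \<pi> c"
    and P: "is_param W EG \<pi> w"
    and x: "x \<in> Pi C (\<lambda>u. Y (pC u))"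
  shows "\<forall>v\<in>VG. forward IB EB VG EG \<pi> c M \<sigma> w x v \<in> Y (\<pi> v)"
proof -
  define f where "f = forward IB EB VG EG \<pi> c M \<sigma> w x"
  have feq: "\<forall>v \<in> VG. f v = (if \<pi> v \<in> IB then x (c v) else Floc EB EG \<pi> M \<sigma> w f v)"
    using forward_eq[OF B G] unfolding f_def by blast
  have wf: "wf EG" by (rule lp_wf[OF B G])
  have EGV: "EG \<subseteq> VG \<times> VG" using G by (simp add: lifted_perceptron_def is_graph_def)
  have hom: "graph_hom VG EG VB EB \<pi>" using G by (simp add: lifted_perceptron_def)
  have "v \<in> VG \<longrightarrow> f v \<in> Y (\<pi> v)" for v
  proof (induction v rule: wf_induct[OF wf])
    case (1 v)
    show ?case
    proof
      assume v: "v \<in> VG"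
      show "f v \<in> Y (\<pi> v)"
      proof (cases "\<pi> v \<in> IB")
        case True
        then have "c v \<in> C" "pC (c v) = \<pi> v" using G v by (auto simp: lifted_perceptron_def)
        moreover have "f v = x (c v)" using bspec[OF feq v] unfolding if_P[OF True] .
        moreover have "x (c v) \<in> Y (pC (c v))" using x \<open>c v \<in> C\<close> by blast
        ultimately show ?thesis by simp
      next
        case False
        have piv: "\<pi> v \<in> VB - IB" using hom v False by (auto simp: graph_hom_def)
        have z: "(if a \<in> in_nbrs EB (\<pi> v)
                   then (\<Sum>u \<in> {u \<in> in_nbrs EG v. \<pi> u = a}. M (\<pi> u, \<pi> v) (w (u, v)) (f u))
                   else 0) \<in> Z (a, \<pi> v)" if a: "a \<in> in_nbrs EB (\<pi> v)" for a
        proof -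
          have ae: "(a, \<pi> v) \<in> EB" using a by (simp add: in_nbrs_def)
          then have sub: "subspace (Z (a, \<pi> v))" using B by (auto simp: perceptron_module_def)
          have "M (\<pi> u, \<pi> v) (w (u, v)) (f u) \<in> Z (a, \<pi> v)"
            if u: "u \<in> {u \<in> in_nbrs EG v. \<pi> u = a}" for u
          proof -
            have ue: "(u, v) \<in> EG" and pua: "\<pi> u = a" using u by (auto simp: in_nbrs_def)
            have "u \<in> VG" using ue EGV by auto
            then have fu: "f u \<in> Y (\<pi> u)" using 1 ue by blast
            have wu: "w (u, v) \<in> W (\<pi> u, \<pi> v)" using P ue by (auto simp: is_param_def)
            have "\<forall>(u, v) \<in> EB. \<forall>w \<in> W (u, v). \<forall>y \<in> Y u. M (u, v) w y \<in> Z (u, v)"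
              using B by (simp add: perceptron_module_def)
            then show ?thesis using ae pua fu wu by fastforce
          qed
          then have "(\<Sum>u \<in> {u \<in> in_nbrs EG v. \<pi> u = a}. M (\<pi> u, \<pi> v) (w (u, v)) (f u)) \<in> Z (a, \<pi> v)"
            by (rule real_vector.subspace_sum[OF sub])
          then show ?thesis using a by simp
        qed
        have "\<forall>v \<in> VB - IB. \<forall>z. (\<forall>a \<in> in_nbrs EB v. z a \<in> Z (a, v)) \<longrightarrow> \<sigma> v z \<in> Y v"
          using B by (simp add: perceptron_module_def)
        then have sg: "\<And>zf. (\<forall>a \<in> in_nbrs EB (\<pi> v). zf a \<in> Z (a, \<pi> v)) \<Longrightarrow> \<sigma> (\<pi> v) zf \<in> Y (\<pi> v)"
          using piv by blast
        have "Floc EB EG \<pi> M \<sigma> w f v \<in> Y (\<pi> v)"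
          unfolding Floc_def by (rule sg) (intro ballI z)
        moreover have "f v = Floc EB EG \<pi> M \<sigma> w f v" using bspec[OF feq v] unfolding if_not_P[OF False] .
        ultimately show ?thesis by (simp only:)
      qed
    qed
  qed
  then show ?thesis unfolding f_def by blast
qed

theorem proposition4:
  fixes VB :: "'b set" and EB :: "('b \<times> 'b) set" and IB TB :: "'b set"
    and Y :: "'b \<Rightarrow> 'y::euclidean_space set"
    and Z :: "'b \<times> 'b \<Rightarrow> 'z::euclidean_space set"
    and W :: "'b \<times> 'b \<Rightarrow> 'w::euclidean_space set"
    and M :: "'b \<times> 'b \<Rightarrow> 'w \<Rightarrow> 'y \<Rightarrow> 'z" and \<sigma> :: "'b \<Rightarrow> ('b \<Rightarrow> 'z) \<Rightarrow> 'y"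
    and C :: "'c set" and pC :: "'c \<Rightarrow> 'b"
    and VG :: "'g set" and EG :: "('g \<times> 'g) set" and \<pi>G :: "'g \<Rightarrow> 'b" and cG :: "'g \<Rightarrow> 'c"
    and VH :: "'h set" and EH :: "('h \<times> 'h) set" and \<pi>H :: "'h \<Rightarrow> 'b" and cH :: "'h \<Rightarrow> 'c"
    and wG :: "'g \<times> 'g \<Rightarrow> 'w" and wH :: "'h \<times> 'h \<Rightarrow> 'w"
    and X :: "('c \<Rightarrow> 'y) set" and \<eta> :: real and \<phi> :: "'g \<Rightarrow> 'h"
  assumes B: "perceptron_module VB EB IB TB Y Z W M \<sigma>"
    and C: "finite C" "pC ` C \<subseteq> IB"
    and G: "lifted_perceptron VB EB IB C pC VG EG \<pi>G cG" "is_param W EG \<pi>G wG"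
    and H: "lifted_perceptron VB EB IB C pC VH EH \<pi>H cH" "is_param W EH \<pi>H wH"
    and X: "X \<subseteq> Pi C (\<lambda>u. Y (pC u))"
    and eta: "\<eta> \<ge> 0"
    and phi: "fibration VG EG VH EH \<phi>"
      "\<forall>v \<in> VG. \<pi>G v = \<pi>H (\<phi> v)"
      "\<forall>v \<in> VG. \<pi>G v \<in> IB \<longrightarrow> cG v = cH (\<phi> v)"
    and close: "\<forall>(u, v) \<in> EG. norm (wG (u, v) - wH (\<phi> u, \<phi> v)) \<le> \<eta>"
  shows "\<forall>v \<in> VG.
    (SUP x \<in> X. ennreal (norm (forward IB EB VG EG \<pi>G cG M \<sigma> wG x v
                               - forward IB EB VH EH \<pi>H cH M \<sigma> wH x (\<phi> v))))
      \<le> Lconst IB EB Y W VH EH \<pi>H cH M \<sigma> wH \<eta> X"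
proof -
  have hom: "graph_hom VG EG VH EH \<phi>" and bijN: "\<forall>v \<in> VG. bij_betw \<phi> (in_nbrs EG v) (in_nbrs EH (\<phi> v))"
    using phi(1) by (auto simp: fibration_def)
  have EGV: "EG \<subseteq> VG \<times> VG" using G(1) by (simp add: lifted_perceptron_def is_graph_def)
  have wfG: "wf EG" by (rule lp_wf[OF B G(1)])
  have key: "ennreal (norm (forward IB EB VG EG \<pi>G cG M \<sigma> wG x v
                               - forward IB EB VH EH \<pi>H cH M \<sigma> wH x (\<phi> v)))
      \<le> Lvals IB EB Y W VH EH \<pi>H cH M \<sigma> wH \<eta> x (\<phi> v)" if x: "x \<in> X" and v0: "v \<in> VG" for x v
  proof -
    define fG where "fG = forward IB EB VG EG \<pi>G cG M \<sigma> wG x"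
    define fH where "fH = forward IB EB VH EH \<pi>H cH M \<sigma> wH x"
    define LH where "LH = Lvals IB EB Y W VH EH \<pi>H cH M \<sigma> wH \<eta> x"
    have fGeq: "\<forall>v \<in> VG. fG v = (if \<pi>G v \<in> IB then x (cG v) else Floc EB EG \<pi>G M \<sigma> wG fG v)"
      using forward_eq[OF B G(1)] unfolding fG_def by blast
    have fHeq: "\<forall>v \<in> VH. fH v = (if \<pi>H v \<in> IB then x (cH v) else Floc EB EH \<pi>H M \<sigma> wH fH v)"
      using forward_eq[OF B H(1)] unfolding fH_def by blast
    have LHeq: "\<forall>v \<in> VH. LH v =
          (if \<pi>H v \<in> IB then 0
           else Sup {ennreal (norm (Floc EB EH \<pi>H M \<sigma> w g v - Floc EB EH \<pi>H M \<sigma> wH fH v)) | w g.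
                       \<forall>u \<in> in_nbrs EH v.
                          w (u, v) \<in> W (\<pi>H u, \<pi>H v) \<and> norm (w (u, v) - wH (u, v)) \<le> \<eta> \<and>
                          g u \<in> Y (\<pi>H u) \<and> ennreal (norm (g u - fH u)) \<le> LH u})"
      using Lvals_eq[OF B H(1), where wz=wH and x=x and \<eta>=\<eta>] unfolding fH_def LH_def by blast
    have fGY: "\<forall>v\<in>VG. fG v \<in> Y (\<pi>G v)"
      using forward_in_Y[OF B G(1) G(2)] x X unfolding fG_def by blast
    have "v \<in> VG \<longrightarrow> ennreal (norm (fG v - fH (\<phi> v))) \<le> LH (\<phi> v)" for v
    proof (induction v rule: wf_induct[OF wfG])
      case (1 v)
      show ?case
      proof
        assume v: "v \<in> VG"
        have pv: "\<phi> v \<in> VH" using hom v by (auto simp: graph_hom_def)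
        have pie: "\<pi>H (\<phi> v) = \<pi>G v" using phi(2) v by simp
        show "ennreal (norm (fG v - fH (\<phi> v))) \<le> LH (\<phi> v)"
        proof (cases "\<pi>G v \<in> IB")
          case True
          have tI: "\<pi>H (\<phi> v) \<in> IB" using pie True by simp
          have "fG v = x (cG v)" using bspec[OF fGeq v] unfolding if_P[OF True] .
          moreover have "fH (\<phi> v) = x (cH (\<phi> v))" using bspec[OF fHeq pv] unfolding if_P[OF tI] .
          moreover have "cG v = cH (\<phi> v)" using phi(3) v True by blast
          ultimately have "fG v = fH (\<phi> v)" by (simp only:)
          then show ?thesis by simp
        next
          case False
          have nI: "\<pi>H (\<phi> v) \<notin> IB" using pie False by simp
          define N where "N = in_nbrs EG v"
          define N' where "N' = in_nbrs EH (\<phi> v)"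
          have bij: "bij_betw \<phi> N N'" using bijN v unfolding N_def N'_def by blast
          have NV: "N \<subseteq> VG" using EGV unfolding N_def in_nbrs_def by auto
          define \<psi> where "\<psi> = inv_into N \<phi>"
          have inj: "inj_on \<phi> N" using bij by (simp add: bij_betw_def)
          have img: "\<phi> ` N = N'" using bij by (simp add: bij_betw_def)
          have psi1: "\<psi> (\<phi> u) = u" if "u \<in> N" for u
            using inj that unfolding \<psi>_def by (simp add: inv_into_f_f)
          have psi2: "\<psi> u' \<in> N \<and> \<phi> (\<psi> u') = u'" if "u' \<in> N'" for u'
            using that img unfolding \<psi>_def by (metis inv_into_into f_inv_into_f)
          have piN: "\<pi>H (\<phi> u) = \<pi>G u" if "u \<in> N" for u using phi(2) NV that by auto
          define w' where "w' = (\<lambda>(u'::'h, v'::'h). wG (\<psi> u', v))"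
          define g where "g = (\<lambda>u'. fG (\<psi> u'))"
          have sums: "(\<Sum>u \<in> {u \<in> N. \<pi>G u = a}. M (\<pi>G u, \<pi>G v) (wG (u, v)) (fG u)) =
                 (\<Sum>u' \<in> {u' \<in> N'. \<pi>H u' = a}. M (\<pi>H u', \<pi>G v) (w' (u', \<phi> v)) (g u'))" for a
          proof -
            have setq: "{u' \<in> N'. \<pi>H u' = a} = \<phi> ` {u \<in> N. \<pi>G u = a}"
              using img piN by auto
            have inj2: "inj_on \<phi> {u \<in> N. \<pi>G u = a}" using inj by (rule inj_on_subset) auto
            show ?thesis unfolding setq sum.reindex[OF inj2]
              by (rule sum.cong) (auto simp: w'_def g_def psi1 piN)
          qed
          have eqF: "Floc EB EG \<pi>G M \<sigma> wG fG v = Floc EB EH \<pi>H M \<sigma> w' g (\<phi> v)"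
            unfolding Floc_def pie
            by (intro arg_cong[where f="\<sigma> (\<pi>G v)"] ext if_cong[OF refl _ refl])
               (rule sums[unfolded N_def N'_def])
          have cons: "\<forall>u' \<in> in_nbrs EH (\<phi> v).
                          w' (u', \<phi> v) \<in> W (\<pi>H u', \<pi>H (\<phi> v)) \<and> norm (w' (u', \<phi> v) - wH (u', \<phi> v)) \<le> \<eta> \<and>
                          g u' \<in> Y (\<pi>H u') \<and> ennreal (norm (g u' - fH u')) \<le> LH u'"
          proof
            fix u' assume u': "u' \<in> in_nbrs EH (\<phi> v)"
            define u where "u = \<psi> u'"
            have uN: "u \<in> N" and uu: "\<phi> u = u'" using psi2 u' unfolding u_def N'_def by auto
            have ue: "(u, v) \<in> EG" using uN unfolding N_def in_nbrs_def by simp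
            have uV: "u \<in> VG" using uN NV by auto
            have w'e: "w' (u', \<phi> v) = wG (u, v)" unfolding w'_def u_def by simp
            have ge: "g u' = fG u" unfolding g_def u_def by simp
            have "wG (u, v) \<in> W (\<pi>G u, \<pi>G v)" using G(2) ue by (auto simp: is_param_def)
            moreover have "norm (wG (u, v) - wH (\<phi> u, \<phi> v)) \<le> \<eta>" using close ue by auto
            moreover have "fG u \<in> Y (\<pi>G u)" using fGY uV by blast
            moreover have "ennreal (norm (fG u - fH (\<phi> u))) \<le> LH (\<phi> u)" using 1 ue uV by blast
            ultimately show "w' (u', \<phi> v) \<in> W (\<pi>H u', \<pi>H (\<phi> v)) \<and> norm (w' (u', \<phi> v) - wH (u', \<phi> v)) \<le> \<eta> \<and>
                          g u' \<in> Y (\<pi>H u') \<and> ennreal (norm (g u' - fH u')) \<le> LH u'"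
              using w'e ge uu piN[OF uN] pie by simp
          qed
          have LHv: "LH (\<phi> v) = Sup {ennreal (norm (Floc EB EH \<pi>H M \<sigma> w g (\<phi> v) - Floc EB EH \<pi>H M \<sigma> wH fH (\<phi> v))) | w g.
                       \<forall>u \<in> in_nbrs EH (\<phi> v).
                          w (u, \<phi> v) \<in> W (\<pi>H u, \<pi>H (\<phi> v)) \<and> norm (w (u, \<phi> v) - wH (u, \<phi> v)) \<le> \<eta> \<and>
                          g u \<in> Y (\<pi>H u) \<and> ennreal (norm (g u - fH u)) \<le> LH u}"
            using bspec[OF LHeq pv] unfolding if_not_P[OF nI] .
          have fHv: "fH (\<phi> v) = Floc EB EH \<pi>H M \<sigma> wH fH (\<phi> v)"
            using bspec[OF fHeq pv] unfolding if_not_P[OF nI] .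
          have fGv: "fG v = Floc EB EG \<pi>G M \<sigma> wG fG v"
            using bspec[OF fGeq v] unfolding if_not_P[OF False] .
          have "ennreal (norm (fG v - fH (\<phi> v))) \<in> {ennreal (norm (Floc EB EH \<pi>H M \<sigma> w g (\<phi> v) - Floc EB EH \<pi>H M \<sigma> wH fH (\<phi> v))) | w g.
                       \<forall>u \<in> in_nbrs EH (\<phi> v).
                          w (u, \<phi> v) \<in> W (\<pi>H u, \<pi>H (\<phi> v)) \<and> norm (w (u, \<phi> v) - wH (u, \<phi> v)) \<le> \<eta> \<and>
                          g u \<in> Y (\<pi>H u) \<and> ennreal (norm (g u - fH u)) \<le> LH u}"
          proof -
            have diff: "ennreal (norm (fG v - fH (\<phi> v))) = ennreal (norm (Floc EB EH \<pi>H M \<sigma> w' g (\<phi> v) - Floc EB EH \<pi>H M \<sigma> wH fH (\<phi> v)))"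
              using fGv eqF fHv by (simp only:)
            show ?thesis unfolding diff using cons by blast
          qed
          then show ?thesis unfolding LHv by (rule Sup_upper)
        qed
      qed
    qed
    then show ?thesis using v0 unfolding fG_def fH_def LH_def by blast
  qed
  show ?thesis
  proof
    fix v assume v: "v \<in> VG"
    have pv: "\<phi> v \<in> VH" using hom v by (auto simp: graph_hom_def)
    show "(SUP x \<in> X. ennreal (norm (forward IB EB VG EG \<pi>G cG M \<sigma> wG x v
                               - forward IB EB VH EH \<pi>H cH M \<sigma> wH x (\<phi> v))))
      \<le> Lconst IB EB Y W VH EH \<pi>H cH M \<sigma> wH \<eta> X"
      unfolding Lconst_def
    proof (rule SUP_mono)
      fix x assume x: "x \<in> X"
      show "\<exists>m\<in>X. ennreal (norm (forward IB EB VG EG \<pi>G cG M \<sigma> wG x v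
                               - forward IB EB VH EH \<pi>H cH M \<sigma> wH x (\<phi> v)))
          \<le> (SUP v \<in> VH. Lvals IB EB Y W VH EH \<pi>H cH M \<sigma> wH \<eta> m v)"
        using x key[OF x v] pv by (meson SUP_upper2)
    qed
  qed
qed


end
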